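(* Let $P,Q,R\in\mathbb P_d$, $U_P:=\operatorname{Pol}(P^{1/2}R^{1/2})$, $U_Q:=\operatorname{Pol}(Q^{1/2}R^{1/2})$, and let $|\Omega\rangle:=\sum_{i=1}^d|i\rangle\otimes|i\rangle\in\mathbb C^d\otimes\mathbb C^d$. Define the purifications $|P_{U_P^\top}\rangle:=(P^{1/2}\otimes U_P^\top)|\Omega\rangle$ and $|Q_{U_Q^\top}\rangle:=(Q^{1/2}\otimes U_Q^\top)|\Omega\rangle$ (so that the partial trace over the second factor of $|P_{U_P^\top}\rangle\langle P_{U_P^\top}|$ is $P$, and similarly for $Q$). Then $$\operatorname{F}_R(P,Q)=\big\langle P_{U_P^\top},\,Q_{U_Q^\top}\big\rangle,$$ where the inner product is conjugate-linear in the first argument.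
   Context: $\mathbb P_d$ is the set of $d\times d$ complex positive definite matrices; $\operatorname{Pol}(M):=M(M^*M)^{-1/2}$ is the unitary polar factor of an invertible $M$, and $^\top$ denotes transpose in the standard basis. The generalized fidelity is $\operatorname{F}_R(P,Q):=\operatorname{Tr}\big[\sqrt{R^{1/2}PR^{1/2}}\,R^{-1}\sqrt{R^{1/2}QR^{1/2}}\big]$. *)

theory Defs
  imports "HOL-Analysis.Analysis"
begin

text \<open>Complex d x d matrices are rendered as complex^'n^'n with 'n a finite index type
  (d = CARD('n)). The tensor product space C^d (x) C^d is complex^('n \<times> 'n).\<close>

definition cadj :: "complex^'n^'m \<Rightarrow> complex^'m^'n" where
  "cadj A = (\<chi> i j. cnj (A $ j $ i))"

definition cinner :: "complex^'n \<Rightarrow> complex^'n \<Rightarrow> complex" where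
  "cinner x y = (\<Sum>i\<in>UNIV. cnj (x $ i) * y $ i)"

definition hermitian :: "complex^'n^'n \<Rightarrow> bool" where
  "hermitian A \<longleftrightarrow> cadj A = A"

definition psd :: "complex^'n^'n \<Rightarrow> bool" where
  "psd A \<longleftrightarrow> hermitian A \<and> (\<forall>x. Re (cinner x (A *v x)) \<ge> 0)"

definition posdef :: "complex^'n^'n \<Rightarrow> bool" where
  "posdef A \<longleftrightarrow> hermitian A \<and> (\<forall>x. x \<noteq> 0 \<longrightarrow> Re (cinner x (A *v x)) > 0)"

definition msqrt :: "complex^'n^'n \<Rightarrow> complex^'n^'n" where
  "msqrt A = (THE B. psd B \<and> B ** B = A)"

definition Pol :: "complex^'n^'n \<Rightarrow> complex^'n^'n" where
  "Pol M = M ** matrix_inv (msqrt (cadj M ** M))"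

definition fidR :: "complex^'n^'n \<Rightarrow> complex^'n^'n \<Rightarrow> complex^'n^'n \<Rightarrow> complex" where
  "fidR R P Q = trace (msqrt (msqrt R ** P ** msqrt R) ** matrix_inv R
                        ** msqrt (msqrt R ** Q ** msqrt R))"

definition kron :: "complex^'n^'n \<Rightarrow> complex^'n^'n \<Rightarrow> complex^('n \<times> 'n)^('n \<times> 'n)" where
  "kron A B = (\<chi> p q. A $ fst p $ fst q * B $ snd p $ snd q)"

definition Omega :: "complex^('n::finite \<times> 'n)" where
  "Omega = (\<chi> p. if fst p = snd p then 1 else 0)"

end

theory Submission
  imports Defs
begin


lemma cadj_nth[simp]: "cadj A $ i $ j = cnj (A $ j $ i)"
  by (simp add: cadj_def)

lemma cadj_cadj[simp]: "cadj (cadj A) = A"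
  by (simp add: vec_eq_iff)

lemma cadj_mult: "cadj (A ** B) = cadj B ** cadj A"
  by (simp add: vec_eq_iff matrix_matrix_mult_def mult.commute)

lemma cadj_mat1[simp]: "cadj (mat 1 :: complex^'n^'n) = mat 1"
  by (simp add: vec_eq_iff mat_def)

lemma cinner_adj: "cinner x (A *v y) = cinner (cadj A *v x) y"
proof -
  have "cinner x (A *v y) = (\<Sum>i\<in>UNIV. \<Sum>j\<in>UNIV. cnj (x$i) * A$i$j * y$j)"
    unfolding cinner_def matrix_vector_mult_def by (simp add: sum_distrib_left mult.assoc)
  also have "\<dots> = (\<Sum>j\<in>UNIV. \<Sum>i\<in>UNIV. cnj (x$i) * A$i$j * y$j)"
    by (rule sum.swap)
  also have "\<dots> = cinner (cadj A *v x) y"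
    unfolding cinner_def matrix_vector_mult_def by (simp add: sum_distrib_right sum_distrib_left mult.commute mult.left_commute)
  finally show ?thesis .
qed

lemma cinner_cnj: "cnj (cinner x y) = cinner y x"
  by (simp add: cinner_def mult.commute)

lemma herm_cinner_swap: "hermitian A \<Longrightarrow> cinner x (A *v y) = cinner (A *v x) y"
  by (simp add: cinner_adj hermitian_def)

lemma herm_real: "hermitian A \<Longrightarrow> Im (cinner x (A *v x)) = 0"
proof -
  assume h: "hermitian A"
  have "cnj (cinner x (A *v x)) = cinner x (A *v x)"
    by (simp add: cinner_cnj herm_cinner_swap[OF h])
  then show ?thesis by (metis Reals_cnj_iff complex_is_Real_iff)
qed

lemma cinner_self: "cinner x x = complex_of_real ((norm x)^2)"
proof -
  have "cinner x x = (\<Sum>i\<in>UNIV. complex_of_real ((cmod (x$i))^2))"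
    unfolding cinner_def by (metis complex_norm_square mult.commute)
  also have "\<dots> = complex_of_real (\<Sum>i\<in>UNIV. (cmod (x$i))^2)" by simp
  also have "(\<Sum>i\<in>UNIV. (cmod (x$i))^2) = (norm x)^2"
    by (simp add: norm_vec_def L2_set_def sum_nonneg)
  finally show ?thesis .
qed

lemma cinner_self_eq0: "cinner x x = 0 \<longleftrightarrow> x = 0"
  by (simp add: cinner_self)

lemma inner_Re_cinner: "inner x y = Re (cinner x y)"
  by (simp add: inner_vec_def cinner_def inner_complex_def Re_sum)

lemma cinner_add_left: "cinner (x + y) z = cinner x z + cinner y z"
  by (simp add: cinner_def distrib_right sum.distrib)
lemma cinner_add_right: "cinner z (x + y) = cinner z x + cinner z y"
  by (simp add: cinner_def distrib_left sum.distrib)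
lemma cinner_diff_right: "cinner z (x - y) = cinner z x - cinner z y"
  by (simp add: cinner_def right_diff_distrib sum_subtractf)
lemma scaleR_nth: fixes x :: "complex^'n" and t :: real shows "(t *\<^sub>R x) $ i = complex_of_real t * (x $ i)"
  unfolding vector_scaleR_component by (rule scaleR_conv_of_real)

lemma cinner_scaleR_left: "cinner (t *\<^sub>R x) z = complex_of_real t * cinner x z"
  by (simp add: cinner_def sum_distrib_left scaleR_nth mult.assoc del: vector_scaleR_component)
lemma cinner_scaleR_right: "cinner z (t *\<^sub>R x) = complex_of_real t * cinner z x"
  by (simp add: cinner_def sum_distrib_left scaleR_nth mult.left_commute del: vector_scaleR_component)
lemma cinner_smult_left: "cinner (c *s x) z = cnj c * cinner x z"
  by (simp add: cinner_def sum_distrib_left mult.assoc)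
lemma cinner_smult_right: "cinner z (c *s x) = c * cinner z x"
  by (simp add: cinner_def sum_distrib_left mult.left_commute)
lemma cinner_zero_right[simp]: "cinner z 0 = 0"
  by (simp add: cinner_def)
lemma cinner_zero_left[simp]: "cinner 0 z = 0"
  by (simp add: cinner_def)

lemma delta_l: fixes i :: "'n::finite" shows "(\<Sum>k\<in>UNIV. (if i = k then c k else 0) * f k) = (c i * f i :: complex)"
proof -
  have "(\<Sum>k\<in>UNIV. (if i = k then c k else 0) * f k) = (\<Sum>k\<in>UNIV. if k = i then c k * f k else 0)"
    by (rule sum.cong) auto
  then show ?thesis by simp
qed

lemma delta_r: fixes j :: "'n::finite" shows "(\<Sum>k\<in>UNIV. f k * (if k = j then c k else 0)) = (f j * c j :: complex)"
proof -
  have "(\<Sum>k\<in>UNIV. f k * (if k = j then c k else 0)) = (\<Sum>k\<in>UNIV. if k = j then f k * c k else 0)"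
    by (rule sum.cong) auto
  then show ?thesis by simp
qed

lemma mv_scaleR: "(A::complex^'n^'m) *v (t *\<^sub>R x) = t *\<^sub>R (A *v x)"
  by (simp add: vec_eq_iff matrix_vector_mult_def scaleR_nth sum_distrib_left mult.left_commute del: vector_scaleR_component)
lemma mv_smult: "(A::complex^'n^'m) *v (c *s x) = c *s (A *v x)"
  by (simp add: vec_eq_iff matrix_vector_mult_def sum_distrib_left mult.left_commute)



lemma quad_zero:
  fixes a b :: real
  assumes h: "\<And>t. 2*t*a + t^2*b \<ge> 0"
  shows "a = 0"
proof (rule ccontr)
  assume a0: "a \<noteq> 0"
  define s where "s = 1 / (\<bar>b\<bar> + 1)"
  have s0: "s > 0" by (simp add: s_def add_pos_nonneg)
  have sb: "s * b < 1"
  proof -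
    have "s * b \<le> s * \<bar>b\<bar>" using s0 by (simp add: mult_left_mono)
    also have "\<dots> < 1" by (simp add: s_def field_simps)
    finally show ?thesis .
  qed
  have "2*(- a * s)*a + (- a * s)^2*b = a^2 * s * (s*b - 2)"
    by (simp add: power2_eq_square algebra_simps)
  also have "\<dots> < 0"
    using a0 s0 sb by (simp add: mult_pos_neg)
  finally show False using h[of "- a * s"] by linarith
qed

lemma herm_kernel_gen:
  assumes hM: "hermitian M"
    and pos: "\<And>t::real. Re (cinner (x + t *\<^sub>R y) (M *v (x + t *\<^sub>R y))) \<ge> 0"
    and z: "Re (cinner x (M *v x)) = 0"
  shows "Re (cinner y (M *v x)) = 0"
proof (rule quad_zero)
  fix t :: real
  have e1: "Re (cinner x (M *v y)) = Re (cinner y (M *v x))"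
  proof -
    have "cinner x (M *v y) = cnj (cinner y (M *v x))"
      by (simp add: cinner_cnj herm_cinner_swap[OF hM])
    then show ?thesis by simp
  qed
  have "cinner (x + t *\<^sub>R y) (M *v (x + t *\<^sub>R y)) =
     cinner x (M *v x) + of_real t * cinner x (M *v y) + of_real t * cinner y (M *v x)
      + of_real t * of_real t * cinner y (M *v y)"
    by (simp add: matrix_vector_right_distrib mv_scaleR cinner_add_left cinner_add_right
        cinner_scaleR_left cinner_scaleR_right algebra_simps)
  then have "Re (cinner (x + t *\<^sub>R y) (M *v (x + t *\<^sub>R y))) =
     2*t*Re (cinner y (M *v x)) + t^2 * Re (cinner y (M *v y))"
    using z e1 by (simp add: power2_eq_square)
  then show "2*t*Re (cinner y (M *v x)) + t^2 * Re (cinner y (M *v y)) \<ge> 0"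
    using pos[of t] by simp
qed

lemma Re_cinner_self: "Re (cinner x x) = (norm x)^2"
  by (simp add: cinner_self)

lemma herm_kernel:
  assumes hM: "hermitian M"
    and pos: "\<And>t::real. Re (cinner (x + t *\<^sub>R (M *v x)) (M *v (x + t *\<^sub>R (M *v x)))) \<ge> 0"
    and z: "Re (cinner x (M *v x)) = 0"
  shows "M *v x = 0"
  using herm_kernel_gen[OF hM pos z] by (simp add: Re_cinner_self)

lemma psd_kernel:
  assumes "psd M" "Re (cinner x (M *v x)) = 0"
  shows "M *v x = 0"
  using assms herm_kernel unfolding psd_def by blast



lemma mm_diff_left: "((A::complex^'n^'m) - B) ** C = A ** C - B ** C"
  by (simp add: vec_eq_iff matrix_matrix_mult_def left_diff_distrib sum_subtractf)
lemma mm_diff_right: "(A::complex^'n^'m) ** (B - C) = A ** B - A ** C"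
  by (simp add: vec_eq_iff matrix_matrix_mult_def right_diff_distrib sum_subtractf)
lemma mm_uminus_right: "(A::complex^'n^'m) ** (- B) = - (A ** B)"
  by (simp add: vec_eq_iff matrix_matrix_mult_def sum_negf)

lemma cadj_diff: "cadj (A - B) = cadj A - cadj B"
  by (simp add: vec_eq_iff)

lemma column_mm: "column k (B ** X) = B *v column k X"
  by (simp add: vec_eq_iff column_def matrix_matrix_mult_def matrix_vector_mult_def)

lemma trace_cadj_mult: "trace (cadj X ** Y) = (\<Sum>k\<in>UNIV. cinner (column k X) (column k Y))"
  by (simp add: trace_def cinner_def column_def matrix_matrix_mult_def)

lemma columns_zero_imp: "(\<And>k. column k X = 0) \<Longrightarrow> X = 0"
  by (simp add: vec_eq_iff column_def) 

lemma trace_cadj_self_zero: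
  assumes "trace (cadj X ** X) = 0" shows "X = 0"
proof -
  have "(\<Sum>k\<in>UNIV. (norm (column k X))^2) = 0"
  proof -
    have "complex_of_real (\<Sum>k\<in>UNIV. (norm (column k X))^2) = 0"
      using assms unfolding trace_cadj_mult cinner_self by simp
    then show ?thesis by (simp only: of_real_eq_0_iff)
  qed
  then have "\<forall>k\<in>UNIV. (norm (column k X))^2 = 0"
    by (subst (asm) sum_nonneg_eq_0_iff) auto
  then show ?thesis by (intro columns_zero_imp) simp
qed

lemma psd_herm: "psd A \<Longrightarrow> hermitian A" by (simp add: psd_def)

lemma psd_sqrt_unique:
  fixes B C :: "complex^'n^'n"
  assumes pB: "psd B" and pC: "psd C" and eq: "B ** B = C ** C"
  shows "B = C"
proof -
  define D where "D = B - C"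
  have hD: "cadj D = D"
    using pB pC by (simp add: D_def cadj_diff psd_def hermitian_def)
  have h1: "B ** D = - (D ** C)"
    using eq by (simp add: D_def mm_diff_left mm_diff_right)
  have t1: "trace (D ** (B ** D)) = - trace (D ** (C ** D))"
  proof -
    have "trace (D ** (B ** D)) = - trace (D ** (D ** C))"
      by (simp add: h1 mm_uminus_right trace_def sum_negf)
    also have "trace (D ** (D ** C)) = trace (D ** (C ** D))"
      by (metis matrix_mul_assoc trace_mul_sym)
    finally show ?thesis .
  qed
  have s0: "(\<Sum>k\<in>UNIV. cinner (column k D) (B *v column k D) + cinner (column k D) (C *v column k D)) = 0"
    using t1 trace_cadj_mult[of D "B ** D"] trace_cadj_mult[of D "C ** D"]
    by (simp add: hD column_mm sum.distrib) (metis add.commute neg_eq_iff_add_eq_0)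
  have "(\<Sum>k\<in>UNIV. Re (cinner (column k D) (B *v column k D)) + Re (cinner (column k D) (C *v column k D))) = 0"
    using arg_cong[OF s0, of Re] by (simp add: Re_sum)
  then have "\<forall>k\<in>UNIV. Re (cinner (column k D) (B *v column k D)) + Re (cinner (column k D) (C *v column k D)) = 0"
    using pB pC by (subst (asm) sum_nonneg_eq_0_iff) (auto simp: psd_def add_nonneg_nonneg)
  then have zz: "\<And>k. Re (cinner (column k D) (B *v column k D)) = 0 \<and> Re (cinner (column k D) (C *v column k D)) = 0"
    using pB pC unfolding psd_def by (meson add_nonneg_eq_0_iff UNIV_I)
  have "B ** D = 0"
    by (rule columns_zero_imp) (simp add: column_mm psd_kernel[OF pB] zz)
  moreover have "C ** D = 0"
    by (rule columns_zero_imp) (simp add: column_mm psd_kernel[OF pC] zz)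
  ultimately have "D ** D = 0" by (simp add: D_def mm_diff_left)
  then have "D = 0"
    by (intro trace_cadj_self_zero) (simp add: hD trace_def)
  then show ?thesis by (simp add: D_def)
qed



lemma cont_cinner_right: "continuous_on S (\<lambda>x. cinner u (x::complex^'n))"
  unfolding cinner_def by (intro continuous_intros)

lemma cont_quadform: "continuous_on S (\<lambda>x. Re (cinner (x::complex^'n) (A *v x)))"
  unfolding cinner_def matrix_vector_mult_def by (intro continuous_intros)

lemma mat_mv: "(mat c :: complex^'n^'n) *v x = c *s x"
proof -
  have "\<And>i. (\<Sum>j\<in>UNIV. (if i = j then c else 0) * x $ j) = c * x $ i"
    by (rule delta_l)
  then show ?thesis by (simp add: vec_eq_iff matrix_vector_mult_def mat_def)
qed

lemma cinner_diff_left: "cinner (x - y) z = cinner x z - cinner y z"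
  by (simp add: cinner_def left_diff_distrib sum_subtractf)

lemma new_eigvec:
  fixes A :: "complex^'n^'n" and v :: "'n \<Rightarrow> complex^'n"
  assumes hA: "hermitian A" and fin: "finite K" and cK: "card K < CARD('n)"
    and eig: "\<forall>i\<in>K. \<exists>\<mu>. A *v v i = \<mu> *s v i"
  shows "\<exists>x. norm x = 1 \<and> (\<forall>i\<in>K. cinner (v i) x = 0) \<and> (\<exists>\<mu>. A *v x = \<mu> *s x)"
proof -
  define S where "S = {x. \<forall>i\<in>K. cinner (v i) x = 0}"
  have S_add: "x + y \<in> S" if "x \<in> S" "y \<in> S" for x y
    using that by (simp add: S_def cinner_add_right)
  have S_diff: "x - y \<in> S" if "x \<in> S" "y \<in> S" for x y
    using that by (simp add: S_def cinner_diff_right)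
  have S_sm: "c *s x \<in> S" if "x \<in> S" for x c
    using that by (simp add: S_def cinner_smult_right)
  have S_scR: "c *\<^sub>R x \<in> S" if "x \<in> S" for x c
    using that by (simp add: S_def cinner_scaleR_right)
  have S_A: "A *v x \<in> S" if "x \<in> S" for x
  proof -
    { fix i assume i: "i \<in> K"
      then obtain \<mu> where m: "A *v v i = \<mu> *s v i" using eig by blast
      have "cinner (v i) (A *v x) = cinner (A *v v i) x" by (rule herm_cinner_swap[OF hA])
      also have "\<dots> = 0" using that i by (simp add: m cinner_smult_left S_def)
      finally have "cinner (v i) (A *v x) = 0" . }
    then show ?thesis by (simp add: S_def)
  qed
  define T where "T = v ` K \<union> (\<lambda>i. \<i> *s v i) ` K"
  have finT: "finite T" using fin by (simp add: T_def)
  have "card T \<le> card (v ` K) + card ((\<lambda>i. \<i> *s v i) ` K)"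
    unfolding T_def by (rule card_Un_le)
  also have "\<dots> \<le> card K + card K" by (intro add_mono card_image_le fin)
  finally have dT: "dim T < DIM(complex^'n)"
    using cK dim_le_card'[OF finT] by (simp add: DIM_cart)
  then obtain y :: "complex^'n" where y0: "y \<noteq> 0" and yo: "\<And>z. z \<in> span T \<Longrightarrow> orthogonal y z"
    using orthogonal_to_subspace_exists[OF dT] by blast
  have yS: "y \<in> S"
  proof -
    { fix i assume i: "i \<in> K"
      have "v i \<in> span T" "\<i> *s v i \<in> span T" using i by (auto simp: T_def intro: span_base)
      then have o1: "inner y (v i) = 0" and o2: "inner y (\<i> *s v i) = 0"
        using yo orthogonal_def by blast+
      have c1: "cinner y (v i) = cnj (cinner (v i) y)" by (simp add: cinner_cnj)
      from o1 have "Re (cinner (v i) y) = 0" by (simp add: inner_Re_cinner c1)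
      moreover from o2 have "Im (cinner (v i) y) = 0"
        by (simp add: inner_Re_cinner cinner_smult_right c1)
      ultimately have "cinner (v i) y = 0" by (simp add: complex_eq_iff) }
    then show ?thesis by (simp add: S_def)
  qed
  define C where "C = S \<inter> sphere 0 1"
  have clS: "closed S"
  proof -
    have "S = (\<Inter>i\<in>K. {x. cinner (v i) x = 0})" by (auto simp: S_def)
    moreover have "closed {x. cinner (v i) x = (\<lambda>_. 0) x}" for i
      by (intro closed_Collect_eq cont_cinner_right continuous_intros)
    ultimately show ?thesis by (auto intro: closed_INT)
  qed
  have compC: "compact C" unfolding C_def
    by (intro closed_Int_compact clS compact_sphere)
  have "(1 / norm y) *\<^sub>R y \<in> C" using y0 yS by (simp add: C_def S_scR)
  then have neC: "C \<noteq> {}" by blast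
  obtain x0 where x0C: "x0 \<in> C" and x0max: "\<And>z. z \<in> C \<Longrightarrow> Re (cinner z (A *v z)) \<le> Re (cinner x0 (A *v x0))"
    using continuous_attains_sup[OF compC neC cont_quadform[of C A]] by blast
  define l where "l = Re (cinner x0 (A *v x0))"
  have x0S: "x0 \<in> S" and nx0: "norm x0 = 1" using x0C by (auto simp: C_def)
  have bound: "Re (cinner z (A *v z)) \<le> l * (norm z)^2" if zS: "z \<in> S" for z
  proof (cases "z = 0")
    case True then show ?thesis by (simp add: matrix_vector_mult_def cinner_def)
  next
    case False
    define w where "w = (1 / norm z) *\<^sub>R z"
    have "w \<in> C" using False zS by (simp add: w_def C_def S_scR)
    then have "Re (cinner w (A *v w)) \<le> l" using x0max l_def by blast
    moreover have "Re (cinner w (A *v w)) = Re (cinner z (A *v z)) / (norm z)^2"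
      by (simp add: w_def mv_scaleR cinner_scaleR_left cinner_scaleR_right power2_eq_square)
    ultimately show ?thesis using False by (simp add: field_simps)
  qed
  define M where "M = mat (complex_of_real l) - A"
  have hM: "hermitian M"
    using hA by (simp add: M_def hermitian_def cadj_diff vec_eq_iff mat_def)
  have qM: "Re (cinner z (M *v z)) = l * (norm z)^2 - Re (cinner z (A *v z))" for z
    by (simp add: M_def matrix_vector_mult_diff_rdistrib mat_mv cinner_diff_right cinner_smult_right cinner_self)
  have Mx0S: "M *v x0 \<in> S"
    using x0S by (simp add: M_def matrix_vector_mult_diff_rdistrib mat_mv S_diff S_sm S_A)
  have "M *v x0 = 0"
  proof (rule herm_kernel[OF hM])
    fix t :: real
    have "x0 + t *\<^sub>R (M *v x0) \<in> S" using x0S Mx0S by (simp add: S_add S_scR)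
    then show "Re (cinner (x0 + t *\<^sub>R (M *v x0)) (M *v (x0 + t *\<^sub>R (M *v x0)))) \<ge> 0"
      using bound qM by simp
  next
    show "Re (cinner x0 (M *v x0)) = 0" using qM nx0 l_def by simp
  qed
  then have "A *v x0 = complex_of_real l *s x0"
    by (simp add: M_def matrix_vector_mult_diff_rdistrib mat_mv)
  then show ?thesis using nx0 x0S by (auto simp: S_def)
qed



lemma eig_basis_aux:
  fixes A :: "complex^'n^'n"
    and K :: "'n set"
  assumes hA: "hermitian A"
  shows "finite K \<Longrightarrow> \<exists>v::'n \<Rightarrow> complex^'n. (\<forall>i\<in>K. \<forall>j\<in>K. cinner (v i) (v j) = (if i = j then 1 else 0))
             \<and> (\<forall>i\<in>K. \<exists>\<mu>. A *v v i = \<mu> *s v i)"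
proof (induction K rule: finite_induct)
  case empty then show ?case by simp
next
  case (insert a K)
  then obtain v where o: "\<forall>i\<in>K. \<forall>j\<in>K. cinner (v i) (v j) = (if i = j then 1 else 0)"
    and e: "\<forall>i\<in>K. \<exists>\<mu>. A *v v i = \<mu> *s v i" by blast
  have "K \<subset> UNIV" using insert(2) by blast
  then have cK: "card K < CARD('n)" using psubset_card_mono[of UNIV K] by simp
  obtain x where nx: "norm x = 1" and ox: "\<forall>i\<in>K. cinner (v i) x = 0" and ex: "\<exists>\<mu>. A *v x = \<mu> *s x"
    using new_eigvec[OF hA insert(1) cK e] by blast
  have ox': "\<forall>i\<in>K. cinner x (v i) = 0" using ox by (metis cinner_cnj complex_cnj_zero)
  have xx: "cinner x x = 1" using nx by (simp add: cinner_self)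
  define w where "w = v(a := x)"
  have "\<forall>i\<in>insert a K. \<forall>j\<in>insert a K. cinner (w i) (w j) = (if i = j then 1 else 0)"
  proof (intro ballI)
    fix i j assume i: "i \<in> insert a K" and j: "j \<in> insert a K"
    show "cinner (w i) (w j) = (if i = j then 1 else 0)"
    proof (cases "i = a")
      case True
      show ?thesis
      proof (cases "j = a")
        case True then show ?thesis using \<open>i = a\<close> xx by (simp add: w_def)
      next
        case False
        then have "j \<in> K" using j by simp
        then show ?thesis using \<open>i = a\<close> False ox' by (simp add: w_def)
      qed
    next
      case False
      then have iK: "i \<in> K" using i by simp
      show ?thesis
      proof (cases "j = a")
        case True then show ?thesis using iK False ox by (simp add: w_def)
      next
        case False
        then have "j \<in> K" using j by simp
        then show ?thesis using iK \<open>i \<noteq> a\<close> False o by (simp add: w_def)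
      qed
    qed
  qed
  moreover have "\<forall>i\<in>insert a K. \<exists>\<mu>. A *v w i = \<mu> *s w i"
    using e ex insert(2) by (auto simp: w_def)
  ultimately show ?case by blast
qed

lemma eig_basis:
  fixes A :: "complex^'n^'n"
  assumes hA: "hermitian A"
  shows "\<exists>v::'n \<Rightarrow> complex^'n. (\<forall>i j. cinner (v i) (v j) = (if i = j then 1 else 0)) \<and> (\<forall>i. \<exists>\<mu>. A *v v i = \<mu> *s v i)"
proof -
  have "finite (UNIV::'n set)" by simp
  from eig_basis_aux[OF hA this] show ?thesis by blast
qed

definition diag :: "('n \<Rightarrow> complex) \<Rightarrow> complex^'n^'n" where
  "diag f = (\<chi> i j. if i = j then f i else 0)"

lemma diag_mult: "diag f ** diag g = diag (\<lambda>i. f i * g i)"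
proof -
  have "\<And>i j. (\<Sum>k\<in>UNIV. (if i = k then f i else 0) * (if k = j then g k else 0)) = (if i = j then f i * g i else 0)"
    by (simp only: delta_l) simp
  then show ?thesis by (simp add: diag_def matrix_matrix_mult_def vec_eq_iff)
qed

lemma cadj_diag: "cadj (diag f) = diag (\<lambda>i. cnj (f i))"
  by (simp add: diag_def vec_eq_iff)

lemma diag_mv: "(diag f *v x) $ i = f i * x $ i"
proof -
  have "(\<Sum>j\<in>UNIV. (if i = j then f i else 0) * x $ j) = f i * x $ i"
    by (simp only: delta_l)
  then show ?thesis by (simp add: diag_def matrix_vector_mult_def)
qed

lemma diag_one: "diag (\<lambda>i. 1) = mat 1"
  by (simp add: diag_def mat_def)

lemma cinner_diag: "cinner x (diag f *v x) = (\<Sum>i\<in>UNIV. f i * complex_of_real ((cmod (x $ i))^2))"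
  unfolding cinner_def diag_mv complex_norm_square by (rule sum.cong) (simp_all add: mult_ac)

lemma psd_sqrt_exists:
  fixes A :: "complex^'n^'n"
  assumes pA: "posdef A"
  shows "\<exists>B. psd B \<and> B ** B = A \<and> invertible B"
proof -
  have hA: "hermitian A" using pA by (simp add: posdef_def)
  obtain v :: "'n \<Rightarrow> complex^'n" where o: "\<And>i j. cinner (v i) (v j) = (if i = j then 1 else 0)"
    and e: "\<And>i. \<exists>\<mu>. A *v v i = \<mu> *s v i" using eig_basis[OF hA] by blast
  define \<mu> where "\<mu> i = Re (cinner (v i) (A *v v i))" for i
  have ev: "A *v v i = complex_of_real (\<mu> i) *s v i" for i
  proof -
    obtain m where m: "A *v v i = m *s v i" using e by blast
    have "cinner (v i) (A *v v i) = m" by (simp add: m cinner_smult_right o)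
    moreover have "Im (cinner (v i) (A *v v i)) = 0" by (rule herm_real[OF hA])
    ultimately have "m = complex_of_real (\<mu> i)" by (simp add: \<mu>_def complex_eq_iff)
    then show ?thesis using m by simp
  qed
  have mpos: "\<mu> i > 0" for i
  proof -
    have "v i \<noteq> 0" using o[of i i] by auto
    then show ?thesis using pA by (simp add: posdef_def \<mu>_def)
  qed
  define U :: "complex^'n^'n" where "U = (\<chi> a i. v i $ a)"
  have UU: "cadj U ** U = mat 1"
    using o by (simp add: U_def vec_eq_iff matrix_matrix_mult_def mat_def cinner_def)
  then have UU': "U ** cadj U = mat 1" by (simp add: matrix_left_right_inverse)
  have AU: "A ** U = U ** diag (\<lambda>i. complex_of_real (\<mu> i))"
  proof -
    have "(A ** U) $ a $ i = (A *v v i) $ a" for a i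
      by (simp add: U_def matrix_matrix_mult_def matrix_vector_mult_def)
    moreover have "(U ** diag (\<lambda>i. complex_of_real (\<mu> i))) $ a $ i = complex_of_real (\<mu> i) * v i $ a" for a i
    proof -
      have "(\<Sum>k\<in>UNIV. v k $ a * (if k = i then complex_of_real (\<mu> k) else 0)) = complex_of_real (\<mu> i) * v i $ a"
        by (simp only: delta_r mult.commute)
      then show ?thesis by (simp add: U_def matrix_matrix_mult_def diag_def)
    qed
    ultimately show ?thesis by (simp add: vec_eq_iff ev)
  qed
  have Aeq: "A = U ** diag (\<lambda>i. complex_of_real (\<mu> i)) ** cadj U"
  proof -
    have "A = A ** (U ** cadj U)" by (simp add: UU')
    also have "\<dots> = (A ** U) ** cadj U" by (simp only: matrix_mul_assoc)
    also have "\<dots> = U ** diag (\<lambda>i. complex_of_real (\<mu> i)) ** cadj U" by (simp only: AU)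
    finally show ?thesis .
  qed
  define s where "s i = complex_of_real (sqrt (\<mu> i))" for i
  define si where "si i = complex_of_real (1 / sqrt (\<mu> i))" for i
  define B where "B = U ** diag s ** cadj U"
  define Bi where "Bi = U ** diag si ** cadj U"
  have gen: "U ** diag f ** cadj U ** (U ** diag g ** cadj U) = U ** diag (\<lambda>i. f i * g i) ** cadj U" for f g
  proof -
    have "U ** diag f ** cadj U ** (U ** diag g ** cadj U) = U ** diag f ** (cadj U ** U) ** diag g ** cadj U"
      by (simp add: matrix_mul_assoc)
    also have "\<dots> = U ** diag f ** diag g ** cadj U"
      by (simp only: UU matrix_mul_rid)
    also have "\<dots> = U ** (diag f ** diag g) ** cadj U"
      by (simp only: matrix_mul_assoc)
    also have "\<dots> = U ** diag (\<lambda>i. f i * g i) ** cadj U"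
      by (simp only: diag_mult)
    finally show ?thesis .
  qed
  have BB: "B ** B = A"
  proof -
    have "(\<lambda>i. s i * s i) = (\<lambda>i. complex_of_real (\<mu> i))"
      using mpos by (auto simp: s_def fun_eq_iff simp flip: of_real_mult) (metis abs_of_pos)
    then show ?thesis unfolding B_def gen by (simp only: Aeq[symmetric])
  qed
  have BBi: "B ** Bi = mat 1"
  proof -
    have "(\<lambda>i. s i * si i) = (\<lambda>i. 1)"
      using mpos by (auto simp: s_def si_def fun_eq_iff simp flip: of_real_mult) (metis less_irrefl)
    then show ?thesis unfolding B_def Bi_def gen by (simp only: diag_one matrix_mul_rid UU')
  qed
  then have "Bi ** B = mat 1" by (simp add: matrix_left_right_inverse)
  with BBi have invB: "invertible B" unfolding invertible_def by blast
  have hB: "hermitian B"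
  proof -
    have "(\<lambda>i. cnj (s i)) = s" by (simp add: s_def fun_eq_iff)
    then show ?thesis
      by (simp add: hermitian_def B_def cadj_mult cadj_diag matrix_mul_assoc)
  qed
  have qB: "Re (cinner x (B *v x)) \<ge> 0" for x
  proof -
    have "cinner x (B *v x) = cinner (cadj U *v x) (diag s *v (cadj U *v x))"
      by (simp add: B_def matrix_vector_mul_assoc[symmetric] cinner_adj)
    also have "\<dots> = (\<Sum>i\<in>UNIV. s i * complex_of_real ((cmod ((cadj U *v x) $ i))^2))"
      by (rule cinner_diag)
    finally have "Re (cinner x (B *v x)) = (\<Sum>i\<in>UNIV. sqrt (\<mu> i) * (cmod ((cadj U *v x) $ i))^2)"
      by (simp add: s_def Re_sum)
    also have "\<dots> \<ge> 0" using mpos by (intro sum_nonneg mult_nonneg_nonneg) (auto intro: less_imp_le)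
    finally show ?thesis .
  qed
  have "psd B" using hB qB by (simp add: psd_def)
  then show ?thesis using BB invB by blast
qed



lemma msqrt_props:
  fixes A :: "complex^'n^'n"
  assumes pA: "posdef A"
  shows "psd (msqrt A) \<and> msqrt A ** msqrt A = A \<and> invertible (msqrt A)"
proof -
  obtain B where B: "psd B" "B ** B = A" "invertible B" using psd_sqrt_exists[OF pA] by blast
  have "msqrt A = B" unfolding msqrt_def
  proof (rule the_equality)
    show "psd B \<and> B ** B = A" using B by simp
  next
    fix C assume "psd C \<and> C ** C = A"
    then show "C = B" using B psd_sqrt_unique by metis
  qed
  then show ?thesis using B by simp
qed

lemma inv_unique:
  fixes X Y :: "complex^'n^'n"
  assumes XY: "X ** Y = mat 1"
  shows "matrix_inv X = Y"
proof -
  have YX: "Y ** X = mat 1" using XY by (simp add: matrix_left_right_inverse)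
  have "\<exists>X'. X ** X' = mat 1 \<and> X' ** X = mat 1" using XY YX by blast
  then have "X ** matrix_inv X = mat 1 \<and> matrix_inv X ** X = mat 1"
    unfolding matrix_inv_def by (rule someI_ex)
  then have "matrix_inv X = matrix_inv X ** (X ** Y)" using XY by simp
  also have "\<dots> = Y" using \<open>X ** matrix_inv X = mat 1 \<and> matrix_inv X ** X = mat 1\<close>
    by (simp add: matrix_mul_assoc)
  finally show ?thesis .
qed

lemma inv_props:
  fixes X :: "complex^'n^'n"
  assumes "invertible X"
  shows "X ** matrix_inv X = mat 1 \<and> matrix_inv X ** X = mat 1"
  using assms unfolding invertible_def matrix_inv_def by (rule someI_ex)

lemma herm_inv:
  fixes X :: "complex^'n^'n"
  assumes h: "cadj X = X" and i: "invertible X"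
  shows "cadj (matrix_inv X) = matrix_inv X"
proof -
  have "cadj (matrix_inv X) ** X = mat 1"
    using inv_props[OF i] h by (metis cadj_mult cadj_mat1)
  then have "X ** cadj (matrix_inv X) = mat 1" by (simp add: matrix_left_right_inverse)
  then show ?thesis using inv_unique by metis
qed

lemma posdef_conj:
  fixes P r :: "complex^'n^'n"
  assumes pP: "posdef P" and hr: "cadj r = r" and ir: "invertible r"
  shows "posdef (r ** P ** r)"
proof -
  have hP: "cadj P = P" using pP by (simp add: posdef_def hermitian_def)
  have "hermitian (r ** P ** r)"
    by (simp add: hermitian_def cadj_mult hr hP matrix_mul_assoc)
  moreover have "Re (cinner x ((r ** P ** r) *v x)) > 0" if x0: "x \<noteq> 0" for x
  proof -
    have rx: "r *v x \<noteq> 0"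
    proof
      assume "r *v x = 0"
      then have "matrix_inv r *v (r *v x) = 0" by simp
      then show False using inv_props[OF ir] x0 by (simp add: matrix_vector_mul_assoc)
    qed
    have "cinner x ((r ** P ** r) *v x) = cinner (r *v x) (P *v (r *v x))"
      by (simp add: matrix_vector_mul_assoc[symmetric] cinner_adj hr)
    then show ?thesis using pP rx by (simp add: posdef_def)
  qed
  ultimately show ?thesis by (simp add: posdef_def)
qed

lemma kron_Omega:
  fixes A U :: "complex^'n^'n"
  shows "kron A (transpose U) *v Omega = (\<chi> p. (A ** U) $ fst p $ snd p)"
proof -
  have "(\<Sum>q\<in>UNIV. A $ i $ fst q * transpose U $ j $ snd q * (if fst q = snd q then 1 else 0))
        = (A ** U) $ i $ j" for i j :: 'n
  proof -
    have "(\<Sum>q\<in>UNIV. A $ i $ fst q * transpose U $ j $ snd q * (if fst q = snd q then 1 else 0))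
       = (\<Sum>k\<in>UNIV. \<Sum>l\<in>UNIV. A $ i $ k * transpose U $ j $ l * (if k = l then 1 else 0))"
      by (simp add: UNIV_Times_UNIV[symmetric] sum.cartesian_product split_def del: UNIV_Times_UNIV)
    also have "\<dots> = (\<Sum>k\<in>UNIV. A $ i $ k * U $ k $ j)"
    proof (rule sum.cong)
      fix k
      show "(\<Sum>l\<in>UNIV. A $ i $ k * transpose U $ j $ l * (if k = l then 1 else 0)) = A $ i $ k * U $ k $ j"
      proof -
        have "(\<Sum>l\<in>UNIV. A $ i $ k * transpose U $ j $ l * (if k = l then 1 else 0))
            = (\<Sum>l\<in>UNIV. if l = k then A $ i $ k * U $ k $ j else 0)"
          by (rule sum.cong) (auto simp: transpose_def)
        also have "\<dots> = A $ i $ k * U $ k $ j" by simp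
        finally show ?thesis .
      qed
    qed simp
    finally show ?thesis by (simp add: matrix_matrix_mult_def)
  qed
  then show ?thesis
    by (simp add: vec_eq_iff kron_def Omega_def matrix_vector_mult_def)
qed

lemma cinner_vecmat:
  fixes X Y :: "complex^'n^'n"
  shows "cinner (\<chi> p. X $ fst p $ snd p) (\<chi> p. Y $ fst p $ snd p) = trace (cadj X ** Y)"
proof -
  have "cinner (\<chi> p. X $ fst p $ snd p) (\<chi> p. Y $ fst p $ snd p)
      = (\<Sum>i\<in>UNIV. \<Sum>j\<in>UNIV. cnj (X $ i $ j) * Y $ i $ j)"
    by (simp add: cinner_def UNIV_Times_UNIV[symmetric] sum.cartesian_product split_def del: UNIV_Times_UNIV)
  also have "\<dots> = (\<Sum>j\<in>UNIV. \<Sum>i\<in>UNIV. cnj (X $ i $ j) * Y $ i $ j)"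
    by (rule sum.swap)
  also have "\<dots> = trace (cadj X ** Y)"
    by (simp add: trace_def matrix_matrix_mult_def)
  finally show ?thesis .
qed



lemma sq_facts:
  fixes A :: "complex^'n^'n"
  assumes "posdef A"
  shows "cadj (msqrt A) = msqrt A" "msqrt A ** msqrt A = A" "invertible (msqrt A)"
  using msqrt_props[OF assms] by (auto simp: psd_def hermitian_def)

lemma Pol_eq:
  fixes a r P :: "complex^'n^'n"
  assumes ha: "cadj a = a" and hr: "cadj r = r" and aa: "a ** a = P"
  shows "Pol (a ** r) = a ** r ** matrix_inv (msqrt (r ** P ** r))"
proof -
  have "cadj (a ** r) ** (a ** r) = r ** P ** r"
    by (simp add: cadj_mult ha hr aa[symmetric] matrix_mul_assoc)
  then show ?thesis by (simp add: Pol_def)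
qed

lemma key_left:
  fixes S r P :: "complex^'n^'n"
  assumes SS: "S ** S = r ** P ** r" and iS: "invertible S" and ir: "invertible r"
  shows "matrix_inv S ** r ** P = S ** matrix_inv r"
proof -
  have i1: "matrix_inv S ** S = mat 1" and i2: "r ** matrix_inv r = mat 1"
    using inv_props[OF iS] inv_props[OF ir] by auto
  have "matrix_inv S ** r ** P = matrix_inv S ** r ** P ** (r ** matrix_inv r)"
    by (simp add: i2)
  also have "\<dots> = matrix_inv S ** (r ** P ** r) ** matrix_inv r"
    by (simp add: matrix_mul_assoc)
  also have "\<dots> = (matrix_inv S ** S) ** S ** matrix_inv r"
    by (simp add: SS[symmetric] matrix_mul_assoc)
  also have "\<dots> = S ** matrix_inv r" by (simp add: i1)
  finally show ?thesis .
qed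

lemma key_right:
  fixes S r Q :: "complex^'n^'n"
  assumes SS: "S ** S = r ** Q ** r" and iS: "invertible S" and ir: "invertible r"
  shows "Q ** r ** matrix_inv S = matrix_inv r ** S"
proof -
  have i1: "S ** matrix_inv S = mat 1" and i2: "matrix_inv r ** r = mat 1"
    using inv_props[OF iS] inv_props[OF ir] by auto
  have "Q ** r ** matrix_inv S = (matrix_inv r ** r) ** Q ** r ** matrix_inv S"
    by (simp add: i2)
  also have "\<dots> = matrix_inv r ** (r ** Q ** r) ** matrix_inv S"
    by (simp add: matrix_mul_assoc)
  also have "\<dots> = matrix_inv r ** S ** (S ** matrix_inv S)"
    by (simp add: SS[symmetric] matrix_mul_assoc)
  also have "\<dots> = matrix_inv r ** S" by (simp add: i1)
  finally show ?thesis .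
qed

theorem mainTheorem17:
  fixes P Q R :: "complex^'n^'n"
  assumes "posdef P" and "posdef Q" and "posdef R"
  shows "fidR R P Q =
    cinner (kron (msqrt P) (transpose (Pol (msqrt P ** msqrt R))) *v Omega)
           (kron (msqrt Q) (transpose (Pol (msqrt Q ** msqrt R))) *v Omega)"
proof -
  define a where "a = msqrt P"
  define q where "q = msqrt Q"
  define r where "r = msqrt R"
  note fa = sq_facts[OF assms(1), folded a_def]
  note fq = sq_facts[OF assms(2), folded q_def]
  note fr = sq_facts[OF assms(3), folded r_def]
  define SP where "SP = msqrt (r ** P ** r)"
  define SQ where "SQ = msqrt (r ** Q ** r)"
  note fSP = sq_facts[OF posdef_conj[OF assms(1) fr(1) fr(3)], folded SP_def]
  note fSQ = sq_facts[OF posdef_conj[OF assms(2) fr(1) fr(3)], folded SQ_def]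
  define iSP where "iSP = matrix_inv SP"
  define iSQ where "iSQ = matrix_inv SQ"
  define ir where "ir = matrix_inv r"
  have UP: "Pol (a ** r) = a ** r ** iSP"
    using Pol_eq[OF fa(1) fr(1) fa(2)] by (simp add: iSP_def SP_def)
  have UQ: "Pol (q ** r) = q ** r ** iSQ"
    using Pol_eq[OF fq(1) fr(1) fq(2)] by (simp add: iSQ_def SQ_def)
  have hiSP: "cadj iSP = iSP" unfolding iSP_def by (rule herm_inv[OF fSP(1) fSP(3)])
  have k1: "iSP ** r ** P = SP ** ir"
    unfolding iSP_def ir_def by (rule key_left[OF fSP(2) fSP(3) fr(3)])
  have k2: "Q ** r ** iSQ = ir ** SQ"
    unfolding iSQ_def ir_def by (rule key_right[OF fSQ(2) fSQ(3) fr(3)])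
  have k3: "matrix_inv R = ir ** ir"
  proof -
    have "r ** r ** (ir ** ir) = r ** (r ** ir) ** ir" by (simp add: matrix_mul_assoc)
    also have "\<dots> = mat 1" using inv_props[OF fr(3)] by (simp add: ir_def)
    finally show ?thesis using fr(2) inv_unique by metis
  qed
  have "cadj (a ** Pol (a ** r)) ** (q ** Pol (q ** r)) = iSP ** r ** (a ** a) ** ((q ** q) ** r ** iSQ)"
    by (simp add: UP UQ cadj_mult hiSP fa(1) fr(1) matrix_mul_assoc)
  also have "\<dots> = (iSP ** r ** P) ** (Q ** r ** iSQ)"
    by (simp add: fa(2) fq(2))
  also have "\<dots> = SP ** matrix_inv R ** SQ"
    by (simp add: k1 k2 k3 matrix_mul_assoc)
  finally have eq: "cadj (a ** Pol (a ** r)) ** (q ** Pol (q ** r)) = SP ** matrix_inv R ** SQ" .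
  have l: "fidR R P Q = trace (SP ** matrix_inv R ** SQ)"
    unfolding fidR_def SP_def SQ_def r_def ..
  have rr: "cinner (kron (msqrt P) (transpose (Pol (msqrt P ** msqrt R))) *v Omega)
           (kron (msqrt Q) (transpose (Pol (msqrt Q ** msqrt R))) *v Omega)
       = trace (cadj (a ** Pol (a ** r)) ** (q ** Pol (q ** r)))"
    unfolding kron_Omega cinner_vecmat a_def q_def r_def ..
  show ?thesis unfolding l rr eq ..
qed

end
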